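(* Let $(f,\bar{f})\colon (G,P_G)\to (H,P_H)$ be a regular epimorphism in $\mathsf{PreOrdGrp}$ (i.e. both $f\colon G\to H$ and $\bar f\colon P_G\to P_H$ are surjective). The following conditions are equivalent: (1) (i) $\mathsf{Ker}(f)\subseteq Z(G)$ (the center of $G$), and (ii) for all $a,b,c\in P_G$ with $\eta_G(a)=\eta_G(b)$ and $f(b)=f(c)$, one has $a-b+c\in P_G$; (2) $(f,\bar f)$ is a $\Gamma_C$-normal extension.
   Context: A preordered group is a pair $(G,P_G)$ where $G$ is a group (written additively, not necessarily abelian) and $P_G\subseteq G$ is a submonoid closed under conjugation in $G$ (the positive cone). A morphism $(f,\bar f)\colon (G,P_G)\to(H,P_H)$ is a group homomorphism $f\colon G\to H$ with $f(P_G)\subseteq P_H$, $\bar f$ being its restriction $P_G\to P_H$. This gives the category $\mathsf{PreOrdGrp}$; $\mathsf{PreOrdAb}$ is its full subcategory of those $(G,P_G)$ with $G$ abelian. Limits in $\mathsf{PreOrdGrp}$ are computed componentwise (e.g. the pullback of $(f,\bar f)$ and $(g,\bar g)$ is the pair of the group pullback and the monoid pullback of the positive cones), and the regular (= normal = effective descent) epimorphisms are exactly the morphisms $(f,\bar f)$ with both $f$ and $\bar f$ surjective. For a group $G$, $\eta_G\colon G\to G/[G,G]$ is the abelianization quotient. The functor $C\colon\mathsf{PreOrdGrp}\to\mathsf{PreOrdAb}$, $C(G,P_G)=(G/[G,G],\eta_G(P_G))$, is left adjoint to the inclusion $V$, with unit $(\eta_G,\bar\eta_G)$, $\bar\eta_G\colon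 P_G\to\eta_G(P_G)$ the restriction. A morphism $(f,\bar f)\colon X\to Y$ which is a regular epimorphism is a $\Gamma_C$-trivial extension if the naturality square formed by $(f,\bar f)$, the units $X\to VC(X)$, $Y\to VC(Y)$ and $VC(f,\bar f)$ is a pullback in $\mathsf{PreOrdGrp}$. A regular epimorphism $(f,\bar f)$ is a $\Gamma_C$-normal extension if the first projection of its kernel pair $(\pi_1,\bar\pi_1)\colon (Eq(f),Eq(\bar f))\to (G,P_G)$ is a $\Gamma_C$-trivial extension, where $Eq(f)=\{(x,y)\in G\times G: f(x)=f(y)\}$ and $Eq(\bar f)=Eq(f)\cap(P_G\times P_G)$. *)

theory Defs
  imports "HOL-Algebra.Algebra"
begin

text \<open>Preordered groups (G, P): G a group (HOL-Algebra, written multiplicatively here;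
  the paper writes it additively), P a submonoid of G closed under conjugation.\<close>

definition preord_grp :: "('a, 'm) monoid_scheme \<Rightarrow> 'a set \<Rightarrow> bool" where
  "preord_grp G P \<longleftrightarrow> group G \<and> P \<subseteq> carrier G \<and> \<one>\<^bsub>G\<^esub> \<in> P
     \<and> (\<forall>x\<in>P. \<forall>y\<in>P. x \<otimes>\<^bsub>G\<^esub> y \<in> P)
     \<and> (\<forall>g\<in>carrier G. \<forall>p\<in>P. g \<otimes>\<^bsub>G\<^esub> p \<otimes>\<^bsub>G\<^esub> inv\<^bsub>G\<^esub> g \<in> P)"

definition preord_mor :: "('a, 'm) monoid_scheme \<Rightarrow> 'a set \<Rightarrow> ('b, 'n) monoid_scheme \<Rightarrow> 'b set
    \<Rightarrow> ('a \<Rightarrow> 'b) \<Rightarrow> bool" where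
  "preord_mor G P H Q f \<longleftrightarrow> f \<in> hom G H \<and> f ` P \<subseteq> Q"

definition regular_epi :: "('a, 'm) monoid_scheme \<Rightarrow> 'a set \<Rightarrow> ('b, 'n) monoid_scheme \<Rightarrow> 'b set
    \<Rightarrow> ('a \<Rightarrow> 'b) \<Rightarrow> bool" where
  "regular_epi G P H Q f \<longleftrightarrow> preord_mor G P H Q f \<and> f ` carrier G = carrier H \<and> f ` P = Q"

definition center :: "('a, 'm) monoid_scheme \<Rightarrow> 'a set" where
  "center G = {z \<in> carrier G. \<forall>g\<in>carrier G. z \<otimes>\<^bsub>G\<^esub> g = g \<otimes>\<^bsub>G\<^esub> z}"

text \<open>Abelianization quotient map \<eta>_G : G \<rightarrow> G/[G,G]  (G Mod derived G (carrier G)).\<close>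
definition eta :: "('a, 'm) monoid_scheme \<Rightarrow> 'a \<Rightarrow> 'a set" where
  "eta G x = derived G (carrier G) #>\<^bsub>G\<^esub> x"

text \<open>Gamma_C-trivial extension: (f, fbar) is a regular epimorphism and the naturality square
  with the units and VC(f) is a pullback in PreOrdGrp. Since limits are computed componentwise,
  this means: the square of groups is a pullback of groups and the square of positive cones
  is a pullback of monoids. VC(f) sends eta_G(g) to eta_H(f g); we quantify over representatives g.
  Pullback = for every compatible pair there is a unique element mapping to it.\<close>
definition trivial_ext :: "('a, 'm) monoid_scheme \<Rightarrow> 'a set \<Rightarrow> ('b, 'n) monoid_scheme \<Rightarrow> 'b set
    \<Rightarrow> ('a \<Rightarrow> 'b) \<Rightarrow> bool" where
  "trivial_ext G P H Q f \<longleftrightarrow> regular_epi G P H Q f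
     \<and> (\<forall>h\<in>carrier H. \<forall>g\<in>carrier G. eta H h = eta H (f g) \<longrightarrow>
          (\<exists>!x. x \<in> carrier G \<and> f x = h \<and> eta G x = eta G g))
     \<and> (\<forall>q\<in>Q. \<forall>p\<in>P. eta H q = eta H (f p) \<longrightarrow>
          (\<exists>!x. x \<in> P \<and> f x = q \<and> eta G x = eta G p))"

definition kernel_pair_grp :: "('a, 'm) monoid_scheme \<Rightarrow> ('a \<Rightarrow> 'b) \<Rightarrow> ('a \<times> 'a) monoid" where
  "kernel_pair_grp G f = (G \<times>\<times> G)\<lparr>carrier := {(x, y). x \<in> carrier G \<and> y \<in> carrier G \<and> f x = f y}\<rparr>"

definition kernel_pair_cone :: "'a set \<Rightarrow> ('a \<Rightarrow> 'b) \<Rightarrow> ('a \<times> 'a) set" where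
  "kernel_pair_cone P f = {(x, y). x \<in> P \<and> y \<in> P \<and> f x = f y}"

definition normal_ext :: "('a, 'm) monoid_scheme \<Rightarrow> 'a set \<Rightarrow> ('b, 'n) monoid_scheme \<Rightarrow> 'b set
    \<Rightarrow> ('a \<Rightarrow> 'b) \<Rightarrow> bool" where
  "normal_ext G P H Q f \<longleftrightarrow> regular_epi G P H Q f
     \<and> trivial_ext (kernel_pair_grp G f) (kernel_pair_cone P f) G P fst"

end

theory Submission imports Defs begin

lemma (in group) comm_central:
  assumes "x1 \<in> carrier G" "x2 \<in> carrier G" "k1 \<in> carrier G" "k2 \<in> carrier G"
    "\<forall>z\<in>carrier G. k1 \<otimes> z = z \<otimes> k1" "\<forall>z\<in>carrier G. k2 \<otimes> z = z \<otimes> k2"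
  shows "(x1\<otimes>k1)\<otimes>(x2\<otimes>k2)\<otimes>inv(x1\<otimes>k1)\<otimes>inv(x2\<otimes>k2) = x1\<otimes>x2\<otimes>inv x1\<otimes>inv x2"
proof -
  have a: "k1 \<otimes> (x2 \<otimes> k2) = (x2 \<otimes> k2) \<otimes> k1" using assms by simp
  have b: "k2 \<otimes> inv x1 = inv x1 \<otimes> k2" using assms by simp
  have "(x1\<otimes>k1)\<otimes>(x2\<otimes>k2)\<otimes>inv(x1\<otimes>k1)\<otimes>inv(x2\<otimes>k2)
      = x1 \<otimes> (k1 \<otimes> (x2 \<otimes> k2)) \<otimes> inv k1 \<otimes> inv x1 \<otimes> inv k2 \<otimes> inv x2"
    using assms(1-4) by (simp add: inv_mult_group m_assoc)
  also have "\<dots> = x1 \<otimes> x2 \<otimes> (k2 \<otimes> inv x1) \<otimes> inv k2 \<otimes> inv x2"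
    unfolding a using assms(1-4) by (simp add: m_assoc)
  also have "\<dots> = x1\<otimes>x2\<otimes>inv x1\<otimes>inv x2"
    unfolding b using assms(1-4) by (simp add: m_assoc)
  finally show ?thesis .
qed

lemma (in group) comm_one:
  assumes "k \<in> carrier G" "g \<in> carrier G" "k \<otimes> g \<otimes> inv k \<otimes> inv g = \<one>"
  shows "k \<otimes> g = g \<otimes> k"
proof -
  have "k \<otimes> g \<otimes> inv k \<otimes> inv g \<otimes> g \<otimes> k = g \<otimes> k" using assms by simp
  thus ?thesis using assms by (simp add: m_assoc)
qed

lemma (in group) coset_eq:
  assumes "subgroup N G" "x \<in> carrier G" "y \<in> carrier G"
  shows "(N #> x = N #> y) \<longleftrightarrow> x \<otimes> inv y \<in> N"
proof
  assume "N #> x = N #> y"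
  then have "x \<in> N #> y" using rcos_self[OF assms(2,1)] by simp
  thus "x \<otimes> inv y \<in> N" using subgroup.rcos_module[OF assms(1) is_group assms(3,2)] by simp
next
  assume "x \<otimes> inv y \<in> N"
  then have "x \<in> N #> y" using subgroup.rcos_module[OF assms(1) is_group assms(3,2)] by simp
  thus "N #> x = N #> y" using repr_independence[OF _ assms(3,1)] by simp
qed


lemma ex1_eq: "\<exists>!x. P x \<Longrightarrow> P a \<Longrightarrow> P b \<Longrightarrow> a = b" by blast

locale kp = G: group G for G :: "'a monoid" (structure) +
  fixes H :: "'b monoid" and f :: "'a \<Rightarrow> 'b"
  assumes gH: "group H" and hom: "f \<in> hom G H"
begin


abbreviation "GG \<equiv> G \<times>\<times> G"
abbreviation "E \<equiv> {(x,y). x \<in> carrier G \<and> y \<in> carrier G \<and> f x = f y}"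
abbreviation "K \<equiv> kernel_pair_grp G f"
abbreviation "D \<equiv> derived GG E"
abbreviation "DG \<equiv> derived G (carrier G)"

lemma fh: "group_hom G H f" using hom gH by (simp add: group_hom_def group_hom_axioms_def G.is_group)

lemma f_mult[simp]: "x \<in> carrier G \<Longrightarrow> y \<in> carrier G \<Longrightarrow> f (x \<otimes> y) = f x \<otimes>\<^bsub>H\<^esub> f y"
  using group_hom.hom_mult[OF fh] by simp
lemma f_inv[simp]: "x \<in> carrier G \<Longrightarrow> f (inv x) = inv\<^bsub>H\<^esub> f x"
  using group_hom.hom_inv[OF fh] by simp
lemma f_one[simp]: "f \<one> = \<one>\<^bsub>H\<^esub>"
  using group_hom.hom_one[OF fh] by simp
lemma f_car[simp]: "x \<in> carrier G \<Longrightarrow> f x \<in> carrier H"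
  using hom by (auto simp: hom_def)
lemmas H_simps[simp] = group.l_inv[OF gH] group.r_inv[OF gH] group.inv_closed[OF gH]
  monoid.m_closed[OF group.is_monoid[OF gH]] monoid.l_one[OF group.is_monoid[OF gH]]
  monoid.r_one[OF group.is_monoid[OF gH]]

lemma GG_group: "group GG"
  by (simp add: DirProd_group G.is_group)

lemma invGG: "x \<in> carrier G \<Longrightarrow> y \<in> carrier G \<Longrightarrow> inv\<^bsub>GG\<^esub> (x,y) = (inv x, inv y)"
  by (simp add: G.is_group)

lemma E_sub: "subgroup E GG"
proof (rule group.subgroupI[OF GG_group])
  show "E \<subseteq> carrier GG" by auto
  show "E \<noteq> {}" by auto
next
  fix a assume "a \<in> E" then show "inv\<^bsub>GG\<^esub> a \<in> E" by (auto simp: invGG)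
next
  fix a b assume "a \<in> E" "b \<in> E" then show "a \<otimes>\<^bsub>GG\<^esub> b \<in> E" by auto
qed

lemma D_sub: "subgroup D GG"
  by (rule group.derived_is_subgroup[OF GG_group]) auto

lemma D_E: "D \<subseteq> E"
  by (rule group.derived_incl[OF GG_group _ E_sub]) simp

lemma K_eq: "K = GG\<lparr>carrier := E\<rparr>"
  unfolding kernel_pair_grp_def by simp

lemma carrier_K: "carrier K = E"
  unfolding K_eq by simp

lemma derived_K: "derived K (carrier K) = D"
  unfolding K_eq using group.derived_consistent[OF GG_group subset_refl E_sub] by simp

lemma eta_K: "x \<in> E \<Longrightarrow> y \<in> E \<Longrightarrow> eta K x = eta K y \<longleftrightarrow> x \<otimes>\<^bsub>GG\<^esub> inv\<^bsub>GG\<^esub> y \<in> D"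
proof -
  assume xy: "x \<in> E" "y \<in> E"
  have e: "eta K z = D #>\<^bsub>GG\<^esub> z" for z
    unfolding eta_def derived_K by (simp add: r_coset_def K_eq)
  have cx: "x \<in> carrier GG" "y \<in> carrier GG" using xy by auto
  show ?thesis by (simp only: e group.coset_eq[OF GG_group D_sub cx])
qed

lemma eta_G: "x \<in> carrier G \<Longrightarrow> y \<in> carrier G \<Longrightarrow> eta G x = eta G y \<longleftrightarrow> x \<otimes> inv y \<in> DG"
  unfolding eta_def using G.coset_eq[OF G.derived_is_subgroup] by simp

lemma diag: assumes "c \<in> DG" shows "(c,c) \<in> D"
proof -
  have gh: "group_hom G GG (\<lambda>x. (x,x))"
    by (rule group_hom.intro[OF G.is_group GG_group]) (auto simp: group_hom_axioms_def hom_def)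
  have "derived GG ((\<lambda>x. (x,x)) ` carrier G) = (\<lambda>x. (x,x)) ` DG"
    using group_hom.derived_img[OF gh] by simp
  moreover have "derived GG ((\<lambda>x. (x,x)) ` carrier G) \<subseteq> D"
    by (rule group.mono_derived[OF GG_group]) auto
  ultimately show ?thesis using assms by auto
qed

lemma comm_in_D: assumes "k \<in> kernel G H f" "g \<in> carrier G"
  shows "(\<one>, k \<otimes> g \<otimes> inv k \<otimes> inv g) \<in> D"
proof -
  have k: "k \<in> carrier G" "f k = \<one>\<^bsub>H\<^esub>" using assms by (auto simp: kernel_def)
  have "(\<one>,k) \<in> E" "(g,g) \<in> E" using k assms by auto
  moreover have "(\<one>, k \<otimes> g \<otimes> inv k \<otimes> inv g) = (\<one>,k) \<otimes>\<^bsub>GG\<^esub> (g,g) \<otimes>\<^bsub>GG\<^esub> inv\<^bsub>GG\<^esub> (\<one>,k) \<otimes>\<^bsub>GG\<^esub> inv\<^bsub>GG\<^esub> (g,g)"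
    using k assms by (simp add: invGG)
  ultimately have "(\<one>, k \<otimes> g \<otimes> inv k \<otimes> inv g) \<in> derived_set GG E" by blast
  then show ?thesis unfolding derived_def by (rule generate.incl)
qed

lemma D_diag: assumes "kernel G H f \<subseteq> center G"
  shows "D \<subseteq> {(x,x) | x. x \<in> carrier G}"
proof -
  have sub: "subgroup {(x,x) | x. x \<in> carrier G} GG"
  proof (rule group.subgroupI[OF GG_group])
    show "{(x,x) | x. x \<in> carrier G} \<subseteq> carrier GG" by auto
    show "{(x,x) | x. x \<in> carrier G} \<noteq> {}" by auto
  next
    fix a assume "a \<in> {(x,x) | x. x \<in> carrier G}" then show "inv\<^bsub>GG\<^esub> a \<in> {(x,x) | x. x \<in> carrier G}"
      by (auto simp: invGG)
  next
    fix a b assume "a \<in> {(x,x) | x. x \<in> carrier G}" "b \<in> {(x,x) | x. x \<in> carrier G}"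
    then show "a \<otimes>\<^bsub>GG\<^esub> b \<in> {(x,x) | x. x \<in> carrier G}" by auto
  qed
  have cen: "\<forall>z\<in>carrier G. (inv x \<otimes> y) \<otimes> z = z \<otimes> (inv x \<otimes> y)"
    if "(x,y) \<in> E" for x y
  proof -
    have "inv x \<otimes> y \<in> kernel G H f" using that by (auto simp: kernel_def)
    then show ?thesis using assms by (auto simp: center_def)
  qed
  have "derived_set GG E \<subseteq> {(x,x) | x. x \<in> carrier G}"
  proof
    fix z assume "z \<in> derived_set GG E"
    then obtain x1 y1 x2 y2 where e: "(x1,y1) \<in> E" "(x2,y2) \<in> E"
      and z: "z = (x1,y1) \<otimes>\<^bsub>GG\<^esub> (x2,y2) \<otimes>\<^bsub>GG\<^esub> inv\<^bsub>GG\<^esub> (x1,y1) \<otimes>\<^bsub>GG\<^esub> inv\<^bsub>GG\<^esub> (x2,y2)"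
      by blast
    have c: "x1 \<in> carrier G" "x2 \<in> carrier G" "y1 \<in> carrier G" "y2 \<in> carrier G" using e by auto
    have y1: "y1 = x1 \<otimes> (inv x1 \<otimes> y1)" using c by (simp add: G.m_assoc[symmetric])
    have y2: "y2 = x2 \<otimes> (inv x2 \<otimes> y2)" using c by (simp add: G.m_assoc[symmetric])
    have "y1 \<otimes> y2 \<otimes> inv y1 \<otimes> inv y2 = x1 \<otimes> x2 \<otimes> inv x1 \<otimes> inv x2"
      apply (subst (1 2) y1, subst (1 2) y2)
      apply (rule G.comm_central)
      using c cen[OF e(1)] cen[OF e(2)] by auto
    then show "z \<in> {(x,x) | x. x \<in> carrier G}" using z c by (auto simp: invGG)
  qed
  then show ?thesis unfolding derived_def
    by (rule group.generate_subgroup_incl[OF GG_group _ sub])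
qed

lemma uniq: assumes "kernel G H f \<subseteq> center G" "x \<in> E" "x' \<in> E" "fst x = fst x'" "eta K x = eta K x'"
  shows "x = x'"
proof -
  obtain a y a' y' where xx: "x = (a,y)" "x' = (a',y')" by force
  have c: "a \<in> carrier G" "y \<in> carrier G" "a' = a" "y' \<in> carrier G" using assms xx by auto
  have "x \<otimes>\<^bsub>GG\<^esub> inv\<^bsub>GG\<^esub> x' \<in> D" using eta_K assms by blast
  then have "(\<one>, y \<otimes> inv y') \<in> {(x,x) | x. x \<in> carrier G}"
    using D_diag[OF assms(1)] xx c by (auto simp: invGG)
  then have "y \<otimes> inv y' = \<one>" by auto
  then have "y = y'" using c by (metis G.inv_equality G.inv_inv G.inv_closed)
  then show ?thesis using xx c by simp
qed

lemma exist: assumes "h \<in> carrier G" "(g1,g2) \<in> E" "eta G h = eta G g1"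
  shows "(h, h \<otimes> inv g1 \<otimes> g2) \<in> E \<and> eta K (h, h \<otimes> inv g1 \<otimes> g2) = eta K (g1,g2)"
proof -
  have c: "g1 \<in> carrier G" "g2 \<in> carrier G" "f g1 = f g2" using assms by auto
  have cD: "h \<otimes> inv g1 \<in> DG" using eta_G assms c by blast
  have "f (h \<otimes> inv g1 \<otimes> g2) = f (h \<otimes> inv g1) \<otimes>\<^bsub>H\<^esub> f g2" using c assms by simp
  also have "\<dots> = f (h \<otimes> inv g1 \<otimes> g1)" using c assms by (simp del: f_inv)
  also have "\<dots> = f h" using c assms by (simp add: G.m_assoc)
  finally have E1: "(h, h \<otimes> inv g1 \<otimes> g2) \<in> E" using c assms by auto
  have "(h, h \<otimes> inv g1 \<otimes> g2) \<otimes>\<^bsub>GG\<^esub> inv\<^bsub>GG\<^esub> (g1,g2) = (h \<otimes> inv g1, h \<otimes> inv g1)"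
    using c assms by (simp add: invGG G.m_assoc)
  then have "eta K (h, h \<otimes> inv g1 \<otimes> g2) = eta K (g1,g2)"
    using eta_K[OF E1 assms(2)] diag[OF cD] by simp
  then show ?thesis using E1 by simp
qed

end

theorem theorem2p9:
  fixes G :: "'a monoid" and H :: "'b monoid" and P :: "'a set" and Q :: "'b set"
    and f :: "'a \<Rightarrow> 'b"
  assumes "preord_grp G P" and "preord_grp H Q"
    and "regular_epi G P H Q f"
  shows "(kernel G H f \<subseteq> center G
          \<and> (\<forall>a\<in>P. \<forall>b\<in>P. \<forall>c\<in>P. eta G a = eta G b \<and> f b = f c
                \<longrightarrow> a \<otimes>\<^bsub>G\<^esub> inv\<^bsub>G\<^esub> b \<otimes>\<^bsub>G\<^esub> c \<in> P))
         \<longleftrightarrow> normal_ext G P H Q f"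
proof -
  have gG: "group G" and PG: "P \<subseteq> carrier G" using assms(1) by (auto simp: preord_grp_def)
  have gH: "group H" using assms(2) by (auto simp: preord_grp_def)
  have hom: "f \<in> hom G H" and fP: "f ` P = Q"
    using assms(3) by (auto simp: regular_epi_def preord_mor_def)
  interpret kp G H f using gG gH hom by (simp add: kp_def kp_axioms_def)
  have KP: "kernel_pair_cone P f \<subseteq> E" using PG by (auto simp: kernel_pair_cone_def)
  have reg: "regular_epi K (kernel_pair_cone P f) G P fst"
  proof -
    have "fst \<in> hom K G" by (auto simp: hom_def K_eq)
    moreover have "fst ` kernel_pair_cone P f = P"
    proof
      show "fst ` kernel_pair_cone P f \<subseteq> P" by (auto simp: kernel_pair_cone_def)
      show "P \<subseteq> fst ` kernel_pair_cone P f"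
      proof
        fix p assume "p \<in> P" then have "(p,p) \<in> kernel_pair_cone P f" by (simp add: kernel_pair_cone_def)
        then show "p \<in> fst ` kernel_pair_cone P f" by (metis fst_conv image_eqI)
      qed
    qed
    moreover have "fst ` carrier K = carrier G"
    proof
      show "fst ` carrier K \<subseteq> carrier G" by (auto simp: carrier_K)
      show "carrier G \<subseteq> fst ` carrier K"
      proof
        fix p assume "p \<in> carrier G" then have "(p,p) \<in> carrier K" by (simp add: carrier_K)
        then show "p \<in> fst ` carrier K" by (metis fst_conv image_eqI)
      qed
    qed
    ultimately show ?thesis by (simp add: regular_epi_def preord_mor_def)
  qed
  show ?thesis
  proof
    assume A: "kernel G H f \<subseteq> center G \<and> (\<forall>a\<in>P. \<forall>b\<in>P. \<forall>c\<in>P. eta G a = eta G b \<and> f b = f c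
                \<longrightarrow> a \<otimes>\<^bsub>G\<^esub> inv\<^bsub>G\<^esub> b \<otimes>\<^bsub>G\<^esub> c \<in> P)"
    then have A1: "kernel G H f \<subseteq> center G"
      and A2: "\<And>a b c. a\<in>P \<Longrightarrow> b\<in>P \<Longrightarrow> c\<in>P \<Longrightarrow> eta G a = eta G b \<Longrightarrow> f b = f c
                \<Longrightarrow> a \<otimes>\<^bsub>G\<^esub> inv\<^bsub>G\<^esub> b \<otimes>\<^bsub>G\<^esub> c \<in> P" by auto
    have g: "\<exists>!x. x \<in> carrier K \<and> fst x = h \<and> eta K x = eta K g"
      if "h \<in> carrier G" "g \<in> carrier K" "eta G h = eta G (fst g)" for h g
    proof -
      obtain g1 g2 where gg: "g = (g1,g2)" by force
      have gE: "(g1,g2) \<in> E" using that(2) gg carrier_K by simp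
      have h1: "eta G h = eta G g1" using that(3) gg by simp
      have ex: "(h, h \<otimes>\<^bsub>G\<^esub> inv\<^bsub>G\<^esub> g1 \<otimes>\<^bsub>G\<^esub> g2) \<in> E \<and> eta K (h, h \<otimes>\<^bsub>G\<^esub> inv\<^bsub>G\<^esub> g1 \<otimes>\<^bsub>G\<^esub> g2) = eta K (g1,g2)"
        by (rule exist[OF that(1) gE h1])
      have exE: "(h, h \<otimes>\<^bsub>G\<^esub> inv\<^bsub>G\<^esub> g1 \<otimes>\<^bsub>G\<^esub> g2) \<in> E" using ex by (rule conjunct1)
      have exK: "eta K (h, h \<otimes>\<^bsub>G\<^esub> inv\<^bsub>G\<^esub> g1 \<otimes>\<^bsub>G\<^esub> g2) = eta K (g1,g2)" using ex by (rule conjunct2)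
      show ?thesis
      proof (rule ex1I[of _ "(h, h \<otimes>\<^bsub>G\<^esub> inv\<^bsub>G\<^esub> g1 \<otimes>\<^bsub>G\<^esub> g2)"])
        show "(h, h \<otimes>\<^bsub>G\<^esub> inv\<^bsub>G\<^esub> g1 \<otimes>\<^bsub>G\<^esub> g2) \<in> carrier K \<and> fst (h, h \<otimes>\<^bsub>G\<^esub> inv\<^bsub>G\<^esub> g1 \<otimes>\<^bsub>G\<^esub> g2) = h \<and> eta K (h, h \<otimes>\<^bsub>G\<^esub> inv\<^bsub>G\<^esub> g1 \<otimes>\<^bsub>G\<^esub> g2) = eta K g"
          unfolding carrier_K gg fst_conv using exE exK by (intro conjI refl)
        fix x assume H: "x \<in> carrier K \<and> fst x = h \<and> eta K x = eta K g"
        have xE: "x \<in> E" using H unfolding carrier_K by (rule conjunct1)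
        show "x = (h, h \<otimes>\<^bsub>G\<^esub> inv\<^bsub>G\<^esub> g1 \<otimes>\<^bsub>G\<^esub> g2)"
        proof (rule uniq[OF A1 xE exE])
          show "fst x = fst (h, h \<otimes>\<^bsub>G\<^esub> inv\<^bsub>G\<^esub> g1 \<otimes>\<^bsub>G\<^esub> g2)" using H by simp
          show "eta K x = eta K (h, h \<otimes>\<^bsub>G\<^esub> inv\<^bsub>G\<^esub> g1 \<otimes>\<^bsub>G\<^esub> g2)" using H exK gg by simp
        qed
      qed
    qed
    have p: "\<exists>!x. x \<in> kernel_pair_cone P f \<and> fst x = h \<and> eta K x = eta K p"
      if "h \<in> P" "p \<in> kernel_pair_cone P f" "eta G h = eta G (fst p)" for h p
    proof -
      obtain g1 g2 where gg: "p = (g1,g2)" by force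
      have c: "g1 \<in> P" "g2 \<in> P" "f g1 = f g2" using that gg by (auto simp: kernel_pair_cone_def)
      have gE: "(g1,g2) \<in> E" using c PG by auto
      have h1: "eta G h = eta G g1" using that(3) gg by simp
      have hc: "h \<in> carrier G" using that(1) PG by auto
      have ex: "(h, h \<otimes>\<^bsub>G\<^esub> inv\<^bsub>G\<^esub> g1 \<otimes>\<^bsub>G\<^esub> g2) \<in> E \<and> eta K (h, h \<otimes>\<^bsub>G\<^esub> inv\<^bsub>G\<^esub> g1 \<otimes>\<^bsub>G\<^esub> g2) = eta K (g1,g2)"
        by (rule exist[OF hc gE h1])
      have exE: "(h, h \<otimes>\<^bsub>G\<^esub> inv\<^bsub>G\<^esub> g1 \<otimes>\<^bsub>G\<^esub> g2) \<in> E" using ex by (rule conjunct1)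
      have exK: "eta K (h, h \<otimes>\<^bsub>G\<^esub> inv\<^bsub>G\<^esub> g1 \<otimes>\<^bsub>G\<^esub> g2) = eta K (g1,g2)" using ex by (rule conjunct2)
      have fw: "f h = f (h \<otimes>\<^bsub>G\<^esub> inv\<^bsub>G\<^esub> g1 \<otimes>\<^bsub>G\<^esub> g2)" using exE by (simp only: mem_Collect_eq prod.case)
      have inP: "h \<otimes>\<^bsub>G\<^esub> inv\<^bsub>G\<^esub> g1 \<otimes>\<^bsub>G\<^esub> g2 \<in> P" by (rule A2[OF that(1) c(1) c(2) h1 c(3)])
      show ?thesis
      proof (rule ex1I[of _ "(h, h \<otimes>\<^bsub>G\<^esub> inv\<^bsub>G\<^esub> g1 \<otimes>\<^bsub>G\<^esub> g2)"])
        show "(h, h \<otimes>\<^bsub>G\<^esub> inv\<^bsub>G\<^esub> g1 \<otimes>\<^bsub>G\<^esub> g2) \<in> kernel_pair_cone P f \<and> fst (h, h \<otimes>\<^bsub>G\<^esub> inv\<^bsub>G\<^esub> g1 \<otimes>\<^bsub>G\<^esub> g2) = h \<and> eta K (h, h \<otimes>\<^bsub>G\<^esub> inv\<^bsub>G\<^esub> g1 \<otimes>\<^bsub>G\<^esub> g2) = eta K p"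
          unfolding kernel_pair_cone_def gg
          by (simp only: mem_Collect_eq prod.case fst_conv that(1) inP fw exK simp_thms)
        fix x assume H: "x \<in> kernel_pair_cone P f \<and> fst x = h \<and> eta K x = eta K p"
        have xE: "x \<in> E" using H KP by blast
        show "x = (h, h \<otimes>\<^bsub>G\<^esub> inv\<^bsub>G\<^esub> g1 \<otimes>\<^bsub>G\<^esub> g2)"
        proof (rule uniq[OF A1 xE exE])
          show "fst x = fst (h, h \<otimes>\<^bsub>G\<^esub> inv\<^bsub>G\<^esub> g1 \<otimes>\<^bsub>G\<^esub> g2)" using H by simp
          show "eta K x = eta K (h, h \<otimes>\<^bsub>G\<^esub> inv\<^bsub>G\<^esub> g1 \<otimes>\<^bsub>G\<^esub> g2)" using H exK gg by simp
        qed
      qed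
    qed
    show "normal_ext G P H Q f"
      unfolding normal_ext_def trivial_ext_def
      apply (intro conjI ballI impI)
         apply (rule assms(3))
        apply (rule reg)
       apply (erule (2) g)
      apply (erule (2) p)
      done
  next
    assume N: "normal_ext G P H Q f"
    then have tr: "trivial_ext K (kernel_pair_cone P f) G P fst" by (simp add: normal_ext_def)
    have Ug: "\<forall>h\<in>carrier G. \<forall>g\<in>E. eta G h = eta G (fst g) \<longrightarrow>
          (\<exists>!x. x \<in> E \<and> fst x = h \<and> eta K x = eta K g)"
      using tr[unfolded trivial_ext_def carrier_K] by (rule conjunct1[OF conjunct2])
    have Cg: "\<forall>q\<in>P. \<forall>p\<in>kernel_pair_cone P f. eta G q = eta G (fst p) \<longrightarrow>
          (\<exists>!x. x \<in> kernel_pair_cone P f \<and> fst x = q \<and> eta K x = eta K p)"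
      using tr[unfolded trivial_ext_def carrier_K] by (rule conjunct2[OF conjunct2])
    note U = Ug[rule_format] and C = Cg[rule_format]
    have cen: "kernel G H f \<subseteq> center G"
    proof
      fix k assume k: "k \<in> kernel G H f"
      have kc: "k \<in> carrier G" using k by (simp add: kernel_def)
      have "k \<otimes>\<^bsub>G\<^esub> g = g \<otimes>\<^bsub>G\<^esub> k" if g: "g \<in> carrier G" for g
      proof -
        have D1: "(\<one>\<^bsub>G\<^esub>, k \<otimes>\<^bsub>G\<^esub> g \<otimes>\<^bsub>G\<^esub> inv\<^bsub>G\<^esub> k \<otimes>\<^bsub>G\<^esub> inv\<^bsub>G\<^esub> g) \<in> D" using comm_in_D k g .
        have E1: "(\<one>\<^bsub>G\<^esub>, k \<otimes>\<^bsub>G\<^esub> g \<otimes>\<^bsub>G\<^esub> inv\<^bsub>G\<^esub> k \<otimes>\<^bsub>G\<^esub> inv\<^bsub>G\<^esub> g) \<in> E" using D1 D_E by blast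
        have E0: "(\<one>\<^bsub>G\<^esub>, \<one>\<^bsub>G\<^esub>) \<in> E" by simp
        have et: "eta K (\<one>\<^bsub>G\<^esub>, k \<otimes>\<^bsub>G\<^esub> g \<otimes>\<^bsub>G\<^esub> inv\<^bsub>G\<^esub> k \<otimes>\<^bsub>G\<^esub> inv\<^bsub>G\<^esub> g) = eta K (\<one>\<^bsub>G\<^esub>, \<one>\<^bsub>G\<^esub>)"
          using eta_K[OF E1 E0] D1 kc g by (simp add: invGG)
        have "(\<one>\<^bsub>G\<^esub>, k \<otimes>\<^bsub>G\<^esub> g \<otimes>\<^bsub>G\<^esub> inv\<^bsub>G\<^esub> k \<otimes>\<^bsub>G\<^esub> inv\<^bsub>G\<^esub> g) = (\<one>\<^bsub>G\<^esub>, \<one>\<^bsub>G\<^esub>)"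
          apply (rule ex1_eq[OF U[OF G.one_closed E0]])
            apply (simp only: fst_conv)
           apply (rule conjI[OF E1 conjI[OF _ et]])
           apply (simp only: fst_conv)
          apply (rule conjI[OF E0 conjI[OF _ refl]])
          apply (simp only: fst_conv)
          done
        then have "k \<otimes>\<^bsub>G\<^esub> g \<otimes>\<^bsub>G\<^esub> inv\<^bsub>G\<^esub> k \<otimes>\<^bsub>G\<^esub> inv\<^bsub>G\<^esub> g = \<one>\<^bsub>G\<^esub>" by simp
        then show ?thesis by (rule G.comm_one[OF kc g])
      qed
      then show "k \<in> center G" using kc by (simp add: center_def)
    qed
    have ii: "a \<otimes>\<^bsub>G\<^esub> inv\<^bsub>G\<^esub> b \<otimes>\<^bsub>G\<^esub> c \<in> P" if abc: "a \<in> P" "b \<in> P" "c \<in> P" "eta G a = eta G b" "f b = f c" for a b c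
    proof -
      have bc: "(b,c) \<in> kernel_pair_cone P f" using abc by (simp add: kernel_pair_cone_def)
      have "\<exists>!x. x \<in> kernel_pair_cone P f \<and> fst x = a \<and> eta K x = eta K (b,c)"
        by (rule C[OF abc(1) bc]) (simp add: abc(4))
      then have "\<exists>x. x \<in> kernel_pair_cone P f \<and> fst x = a \<and> eta K x = eta K (b,c)"
        by (rule ex1_implies_ex)
      then obtain x where x: "x \<in> kernel_pair_cone P f" "fst x = a" "eta K x = eta K (b,c)"
        by blast
      have ex: "(a, a \<otimes>\<^bsub>G\<^esub> inv\<^bsub>G\<^esub> b \<otimes>\<^bsub>G\<^esub> c) \<in> E \<and> eta K (a, a \<otimes>\<^bsub>G\<^esub> inv\<^bsub>G\<^esub> b \<otimes>\<^bsub>G\<^esub> c) = eta K (b,c)"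
        by (rule exist) (use abc PG in auto)
      have "x = (a, a \<otimes>\<^bsub>G\<^esub> inv\<^bsub>G\<^esub> b \<otimes>\<^bsub>G\<^esub> c)"
      proof (rule ex1_eq[OF U])
        show "a \<in> carrier G" "(b,c) \<in> E" using abc PG by auto
        show "eta G a = eta G (fst (b,c))" using abc by simp
        show "x \<in> E \<and> fst x = a \<and> eta K x = eta K (b,c)" using x KP by blast
        show "(a, a \<otimes>\<^bsub>G\<^esub> inv\<^bsub>G\<^esub> b \<otimes>\<^bsub>G\<^esub> c) \<in> E \<and> fst (a, a \<otimes>\<^bsub>G\<^esub> inv\<^bsub>G\<^esub> b \<otimes>\<^bsub>G\<^esub> c) = a \<and>
           eta K (a, a \<otimes>\<^bsub>G\<^esub> inv\<^bsub>G\<^esub> b \<otimes>\<^bsub>G\<^esub> c) = eta K (b,c)" using ex by (simp only: fst_conv simp_thms)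
      qed
      moreover have "snd x \<in> P" using x(1) by (auto simp: kernel_pair_cone_def)
      ultimately show ?thesis by simp
    qed
    show "kernel G H f \<subseteq> center G \<and> (\<forall>a\<in>P. \<forall>b\<in>P. \<forall>c\<in>P. eta G a = eta G b \<and> f b = f c
                \<longrightarrow> a \<otimes>\<^bsub>G\<^esub> inv\<^bsub>G\<^esub> b \<otimes>\<^bsub>G\<^esub> c \<in> P)"
      using cen ii by blast
  qed
qed


end
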